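(* Let $A,B,C\in \mathbb{C}^{n\times n}$ satisfy $ABA=ACA$. If $(AC)^{\#}$ and $(BA)^{\#}$ exist, then $(AC)^{\#}$ is similar to $(BA)^{\#}$.
   Context: A matrix $M\in \mathbb{C}^{n\times n}$ is group invertible if there exists $X$ with $MX=XM$, $XMX=X$, $MXM=M$; such $X$ is unique and denoted $M^{\#}$ (the group inverse). Two matrices $M,N$ are similar if $M=S^{-1}NS$ for some invertible $S$. *)

theory Defs
  imports "HOL-Analysis.Analysis"
begin

definition is_group_inverse :: "'a::comm_ring_1^'n^'n \<Rightarrow> 'a^'n^'n \<Rightarrow> bool" where
  "is_group_inverse M X \<longleftrightarrow> M ** X = X ** M \<and> X ** M ** X = X \<and> M ** X ** M = M"

definition group_invertible :: "'a::comm_ring_1^'n^'n \<Rightarrow> bool" where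
  "group_invertible M \<longleftrightarrow> (\<exists>X. is_group_inverse M X)"

definition group_inverse :: "'a::comm_ring_1^'n^'n \<Rightarrow> 'a^'n^'n" where
  "group_inverse M = (THE X. is_group_inverse M X)"

definition similar :: "'a::field^'n^'n \<Rightarrow> 'a^'n^'n \<Rightarrow> bool" where
  "similar M N \<longleftrightarrow> (\<exists>S. invertible S \<and> M = matrix_inv S ** N ** S)"

end

theory Submission
  imports Defs
begin

lemma gi_unique:
  fixes M X Y :: "'a::comm_ring_1^'n^'n"
  assumes "is_group_inverse M X" "is_group_inverse M Y"
  shows "X = Y"
proof -
  have x1: "M ** X = X ** M" and x2: "X ** M ** X = X" and x3: "M ** X ** M = M"
    using assms(1) unfolding is_group_inverse_def by auto
  have y1: "M ** Y = Y ** M" and y2: "Y ** M ** Y = Y" and y3: "M ** Y ** M = M"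
    using assms(2) unfolding is_group_inverse_def by auto
  have mmx: "M ** M ** X = M" by (metis x1 x3 matrix_mul_assoc)
  have mmy: "M ** M ** Y = M" by (metis y1 y3 matrix_mul_assoc)
  have a: "M ** X = Y ** M"
  proof -
    have "M ** X = (M ** Y ** M) ** X" using y3 by simp
    also have "\<dots> = Y ** (M ** M ** X)" by (metis y1 matrix_mul_assoc)
    finally show ?thesis using mmx by simp
  qed
  have b: "M ** Y = X ** M"
  proof -
    have "M ** Y = (M ** X ** M) ** Y" using x3 by simp
    also have "\<dots> = X ** (M ** M ** Y)" by (metis x1 matrix_mul_assoc)
    finally show ?thesis using mmy by simp
  qed
  have "X = X ** (M ** X)" using x2 by (simp add: matrix_mul_assoc)
  also have "\<dots> = X ** (M ** Y)" using a y1 by simp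
  also have "\<dots> = (X ** M) ** Y" by (simp add: matrix_mul_assoc)
  also have "\<dots> = (Y ** M) ** Y" using b a x1 y1 by simp
  also have "\<dots> = Y" using y2 by simp
  finally show ?thesis .
qed

lemma gi_the:
  fixes M :: "'a::comm_ring_1^'n^'n"
  assumes "group_invertible M"
  shows "is_group_inverse M (group_inverse M)"
proof -
  obtain X where X: "is_group_inverse M X" using assms unfolding group_invertible_def by blast
  have "group_inverse M = X" unfolding group_inverse_def
    using X gi_unique by blast
  then show ?thesis using X by simp
qed

lemma gi_intertwine:
  fixes a b x a' b' :: "'a::comm_ring_1^'n^'n"
  assumes ga: "is_group_inverse a a'" and gb: "is_group_inverse b b'"
    and ax: "a ** x = x ** b"
  shows "a' ** x = x ** b'"
proof -
  have a1: "a ** a' = a' ** a" and a2: "a' ** a ** a' = a'" and a3: "a ** a' ** a = a"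
    using ga unfolding is_group_inverse_def by auto
  have b1: "b ** b' = b' ** b" and b2: "b' ** b ** b' = b'" and b3: "b ** b' ** b = b"
    using gb unfolding is_group_inverse_def by auto
  have e1: "a' ** x = a' ** a' ** x ** b"
  proof -
    have "a' ** x = (a' ** a ** a') ** x" using a2 by simp
    also have "\<dots> = a' ** a' ** (a ** x)" by (metis a1 matrix_mul_assoc)
    finally show ?thesis using ax by (simp add: matrix_mul_assoc)
  qed
  have e2: "a' ** x = a' ** a ** x ** b'"
  proof -
    have "a' ** x = a' ** a' ** x ** (b ** b' ** b)" using e1 b3 by simp
    also have "\<dots> = (a' ** a' ** x ** b) ** b ** b'" by (metis b1 matrix_mul_assoc)
    also have "\<dots> = a' ** x ** b ** b'" using e1 by simp
    also have "\<dots> = a' ** a ** x ** b'" by (metis ax matrix_mul_assoc)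
    finally show ?thesis .
  qed
  have e3: "x ** b' = a ** x ** b' ** b'"
  proof -
    have "x ** b' = x ** (b' ** b ** b')" using b2 by simp
    also have "\<dots> = (x ** b) ** b' ** b'" by (metis b1 matrix_mul_assoc)
    finally show ?thesis by (simp add: ax matrix_mul_assoc)
  qed
  have e4: "x ** b' = a' ** a ** x ** b'"
  proof -
    have "x ** b' = (a ** a' ** a) ** x ** b' ** b'" using e3 a3 by simp
    also have "\<dots> = a ** a' ** (a ** x ** b' ** b')" by (simp add: matrix_mul_assoc)
    also have "\<dots> = a ** a' ** x ** b'" by (metis e3 matrix_mul_assoc)
    finally show ?thesis using a1 by simp
  qed
  show ?thesis using e2 e4 by simp
qed

lemma matrix_inv_left':
  fixes S :: "'a::field^'n^'n"
  assumes "invertible S"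
  shows "matrix_inv S ** S = mat 1"
proof -
  have "\<exists>A'. S ** A' = mat 1 \<and> A' ** S = mat 1" using assms unfolding invertible_def .
  then have "S ** matrix_inv S = mat 1 \<and> matrix_inv S ** S = mat 1"
    unfolding matrix_inv_def by (rule someI_ex)
  then show ?thesis by simp
qed

theorem corollary3p2:
  fixes A B C :: "complex^'n^'n"
  assumes "A ** B ** A = A ** C ** A"
    and "group_invertible (A ** C)"
    and "group_invertible (B ** A)"
  shows "similar (group_inverse (A ** C)) (group_inverse (B ** A))"
proof -
  define M where "M = A ** C"
  define N where "N = B ** A"
  define X where "X = group_inverse M"
  define Z where "Z = group_inverse N"
  define Y where "Y = B ** A ** C"
  have gX: "is_group_inverse M X" unfolding X_def M_def using gi_the assms(2) by blast
  have gZ: "is_group_inverse N Z" unfolding Z_def N_def using gi_the assms(3) by blast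
  have x1: "M ** X = X ** M" and x2: "X ** M ** X = X" and x3: "M ** X ** M = M"
    using gX unfolding is_group_inverse_def by auto
  have z1: "N ** Z = Z ** N" and z2: "Z ** N ** Z = Z" and z3: "N ** Z ** N = N"
    using gZ unfolding is_group_inverse_def by auto
  have aba: "A ** B ** A = A ** C ** A" by (rule assms(1))
  have YM: "Y ** M = N ** Y" unfolding Y_def M_def N_def
    by (metis aba matrix_mul_assoc)
  have YA: "Y ** A = N ** N" unfolding Y_def N_def
    by (metis aba matrix_mul_assoc)
  have AY: "A ** Y = M ** M" unfolding Y_def M_def
    by (metis aba matrix_mul_assoc)
  have AN: "A ** N = M ** A" unfolding M_def N_def
    by (metis aba matrix_mul_assoc)
  have mmx: "M ** M ** X = M" by (metis x1 x3 matrix_mul_assoc)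
  have nnz: "N ** N ** Z = N" by (metis z1 z3 matrix_mul_assoc)
  have xxmm: "X ** X ** M ** M = X ** M" by (metis x1 x2 matrix_mul_assoc)
  have mv: "\<And>U V v. U *v (V *v v) = (U ** V) *v v" by (simp add: matrix_vector_mul_assoc)
  let ?RM = "range ((*v) M)" and ?KM = "{x. M *v x = 0}"
  let ?RN = "range ((*v) N)" and ?KN = "{x. N *v x = 0}"
  have dimsum: "vec.dim (range ((*v) T)) + vec.dim {x. T *v x = 0} = vec.dim (UNIV :: (complex^'n) set)"
    if "is_group_inverse T W" for T W :: "complex^'n^'n"
  proof -
    have w1: "T ** W = W ** T" and w3: "T ** W ** T = T"
      using that unfolding is_group_inverse_def by auto
    have ttw: "T ** T ** W = T" by (metis w1 w3 matrix_mul_assoc)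
    have s1: "vec.subspace (range ((*v) T))" by (rule vec.subspace_image[OF vec.subspace_UNIV])
    have s2: "vec.subspace {x. T *v x = 0}" by (rule vec.subspace_kernel)
    have u: "{x + y |x y. x \<in> range ((*v) T) \<and> y \<in> {x. T *v x = 0}} = UNIV"
    proof -
      have "v \<in> {x + y |x y. x \<in> range ((*v) T) \<and> y \<in> {x. T *v x = 0}}" for v
      proof -
        have "T *v (v - T *v (W *v v)) = 0"
          by (simp add: matrix_vector_mult_diff_distrib mv ttw matrix_mul_assoc)
        then show ?thesis by (intro CollectI exI[of _ "T *v (W *v v)"] exI[of _ "v - T *v (W *v v)"]) auto
      qed
      then show ?thesis by auto
    qed
    have i: "range ((*v) T) \<inter> {x. T *v x = 0} = {0}"
    proof -
      have "y = 0" if "y = T *v t" "T *v y = 0" for y t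
      proof -
        have "y = (T ** W ** T) *v t" using that w3 by simp
        also have "\<dots> = W *v (T *v y)" by (simp add: that(1) mv w1 matrix_mul_assoc)
        finally show ?thesis using that by simp
      qed
      moreover have "0 \<in> range ((*v) T)" by (metis matrix_vector_mult_0_right rangeI)
      ultimately show ?thesis by auto
    qed
    show ?thesis using vec.dim_sums_Int[OF s1 s2] u i by simp
  qed
  have dM: "vec.dim ?RM + vec.dim ?KM = vec.dim (UNIV :: (complex^'n) set)" using dimsum[OF gX] .
  have dN: "vec.dim ?RN + vec.dim ?KN = vec.dim (UNIV :: (complex^'n) set)" using dimsum[OF gZ] .
  have r1: "?RN \<subseteq> (*v) Y ` ?RM"
  proof
    fix v assume "v \<in> ?RN"
    then obtain t where t: "v = N *v t" by auto
    have "N = Y ** (M ** (A ** Z ** Z))"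
      by (metis YA AN nnz z1 z2 matrix_mul_assoc)
    then have "v = Y *v (M *v (A *v (Z *v (Z *v t))))" using t by (simp add: mv matrix_mul_assoc)
    then show "v \<in> (*v) Y ` ?RM" by blast
  qed
  have r2: "?RM \<subseteq> (*v) A ` ?RN"
  proof
    fix v assume "v \<in> ?RM"
    then obtain t where t: "v = M *v t" by auto
    have "M = A ** (N ** (Y ** X ** X))"
      by (metis AY YM mmx x1 x2 matrix_mul_assoc)
    then have "v = A *v (N *v (Y *v (X *v (X *v t))))" using t by (simp add: mv matrix_mul_assoc)
    then show "v \<in> (*v) A ` ?RN" by blast
  qed
  have "vec.dim ?RN \<le> vec.dim ?RM"
    using vec.dim_subset[OF r1] vec.dim_image_le[OF matrix_vector_mul_linear_gen, of Y ?RM] by linarith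
  moreover have "vec.dim ?RM \<le> vec.dim ?RN"
    using vec.dim_subset[OF r2] vec.dim_image_le[OF matrix_vector_mul_linear_gen, of A ?RN] by linarith
  ultimately have dK: "vec.dim ?KM = vec.dim ?KN" using dM dN by linarith
  obtain f where fl: "Vector_Spaces.linear (*s) (*s) f" and fi: "f ` ?KM = ?KN" and finj: "inj_on f ?KM"
    using vec.subspace_isomorphism[OF vec.subspace_kernel vec.subspace_kernel dK] by blast
  define K where "K = matrix f"
  have Kv: "K *v v = f v" for v unfolding K_def by (rule matrix_works[OF fl])
  have f0: "f 0 = 0" using fl by (simp add: vec.linear_0)
  define S where "S = Y ** (M ** X) + K ** (mat 1 - M ** X)"
  have Sv: "S *v v = Y *v (M *v (X *v v)) + f (v - M *v (X *v v))" for v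
  proof -
    have e: "(K ** (mat 1 - M ** X)) *v v = f (v - M *v (X *v v))"
      by (simp only: matrix_vector_mul_assoc[symmetric] Kv matrix_vector_mult_diff_rdistrib matrix_vector_mul_lid)
    have y: "(Y ** (M ** X)) *v v = Y *v (M *v (X *v v))"
      by (simp only: matrix_vector_mul_assoc)
    show ?thesis unfolding S_def matrix_vector_mult_add_rdistrib e y ..
  qed
  have EK: "v - M *v (X *v v) \<in> ?KM" for v
    by (simp add: matrix_vector_mult_diff_distrib mv mmx matrix_mul_assoc)
  have fK: "N *v f (v - M *v (X *v v)) = 0" for v
    using fi EK by blast
  have SM: "S ** M = N ** S"
  proof (rule iffD2[OF matrix_eq], intro allI)
    fix v
    have mxm: "M *v (X *v (M *v v)) = M *v v" by (simp add: mv x3 matrix_mul_assoc)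
    have "(S ** M) *v v = Y *v (M *v v)"
      by (simp only: matrix_vector_mul_assoc[symmetric] Sv mxm) (simp add: f0)
    also have "\<dots> = N *v (Y *v (M *v (X *v v)))"
    proof -
      have "N ** Y ** M ** X = Y ** M" by (metis YM mmx matrix_mul_assoc)
      then show ?thesis by (simp add: mv matrix_mul_assoc)
    qed
    also have "\<dots> = (N ** S) *v v"
      by (simp only: matrix_vector_mul_assoc[symmetric] Sv matrix_vector_right_distrib fK) simp
    finally show "(S ** M) *v v = (N ** S) *v v" .
  qed
  have Sinj: "x = 0" if "S *v x = 0" for x
  proof -
    define u where "u = Y *v (M *v (X *v x))"
    define w where "w = f (x - M *v (X *v x))"
    have uw: "u + w = 0" using that Sv u_def w_def by simp
    have Nw: "N *v w = 0" using fK w_def by simp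
    have un: "u = N *v (Y *v (X *v x))" unfolding u_def
      by (simp only: mv YM matrix_mul_assoc)
    have "N *v (Z *v (u + w)) = u"
    proof -
      have "N *v (Z *v (u + w)) = N *v (Z *v u) + N *v (Z *v w)"
        by (simp only: matrix_vector_right_distrib)
      also have "N *v (Z *v w) = Z *v (N *v w)" by (simp only: mv z1)
      also have "N *v (Z *v u) = (N ** Z ** N) *v (Y *v (X *v x))" by (simp only: un mv matrix_mul_assoc)
      finally show ?thesis using Nw z3 un by (simp only: matrix_vector_mult_0_right add_0_right)
    qed
    then have u0: "u = 0" using uw by simp
    then have w0: "w = 0" using uw by simp
    have "x - M *v (X *v x) = 0"
    proof (rule inj_onD[OF finj])
      show "f (x - M *v (X *v x)) = f 0" using w0 f0 unfolding w_def by simp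
      show "x - M *v (X *v x) \<in> ?KM" by (rule EK)
      show "0 \<in> ?KM" by simp
    qed
    then have xe: "x = M *v (X *v x)" by simp
    have "M *v (M *v x) = 0"
    proof -
      have e: "A ** Y ** M ** X = M ** M" by (metis AY mmx matrix_mul_assoc)
      have "A *v u = (A ** Y ** M ** X) *v x" unfolding u_def by (simp only: mv matrix_mul_assoc)
      then have "A *v u = M *v (M *v x)" using e by (simp only: mv matrix_mul_assoc)
      then show ?thesis using u0 by simp
    qed
    then have "M *v (X *v x) = 0"
    proof -
      assume h: "M *v (M *v x) = 0"
      have "M *v (X *v x) = (X ** X ** M ** M) *v x" by (simp only: xxmm mv x1)
      also have "\<dots> = X *v (X *v (M *v (M *v x)))" by (simp only: mv matrix_mul_assoc)
      finally show ?thesis using h by simp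
    qed
    then show ?thesis using xe by simp
  qed
  have invS: "invertible S"
    using Sinj by (simp add: invertible_left_inverse matrix_left_invertible_ker)
  have ZS: "Z ** S = S ** X"
    using gi_intertwine[OF gZ gX SM[symmetric]] .
  have "X = matrix_inv S ** Z ** S"
  proof -
    have "X = (matrix_inv S ** S) ** X" using matrix_inv_left'[OF invS] by simp
    also have "\<dots> = matrix_inv S ** Z ** S" by (metis ZS matrix_mul_assoc)
    finally show ?thesis .
  qed
  then show ?thesis unfolding similar_def X_def Z_def M_def N_def using invS by blast
qed

end
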